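(* Let $G$ be an essentially $4$-edge-connected bipartite cubic graph with bipartition $(X,Y)$. Let $x\in X$ and $y\in Y$. Then $G-(N_G[x]\cup N_G[y])$ has a perfect matching.
   Context: $N_G[v]=\{v\}\cup N_G(v)$ is the closed neighborhood. A 3-connected cubic graph is essentially 4-edge-connected if every edge cut consisting of three edges $\{e_1,e_2,e_3\}$ induces $K_{1,3}$, i.e., the three edges are the three edges incident to a single vertex. *)

theory Defs
  imports Main
begin

definition graph :: "'a set \<Rightarrow> 'a set set \<Rightarrow> bool" where
  "graph V E \<longleftrightarrow> finite V \<and> (\<forall>e\<in>E. \<exists>u v. u \<noteq> v \<and> u \<in> V \<and> v \<in> V \<and> e = {u, v})"

definition degree :: "'a set set \<Rightarrow> 'a \<Rightarrow> nat" where
  "degree E v = card {e\<in>E. v \<in> e}"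

definition cubic :: "'a set \<Rightarrow> 'a set set \<Rightarrow> bool" where
  "cubic V E \<longleftrightarrow> graph V E \<and> (\<forall>v\<in>V. degree E v = 3)"

definition nbhd :: "'a set set \<Rightarrow> 'a \<Rightarrow> 'a set" where
  "nbhd E v = {u. {u, v} \<in> E}"

definition closed_nbhd :: "'a set set \<Rightarrow> 'a \<Rightarrow> 'a set" where
  "closed_nbhd E v = insert v (nbhd E v)"

text \<open>Vertex deletion G - S: vertex set V - S, edges of E avoiding S.\<close>
definition del_edges :: "'a set set \<Rightarrow> 'a set \<Rightarrow> 'a set set" where
  "del_edges E S = {e\<in>E. e \<inter> S = {}}"

definition connected :: "'a set \<Rightarrow> 'a set set \<Rightarrow> bool" where
  "connected V E \<longleftrightarrow> (\<forall>u\<in>V. \<forall>v\<in>V. (\<lambda>a b. {a, b} \<in> E)\<^sup>*\<^sup>* u v)"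

definition k_connected :: "nat \<Rightarrow> 'a set \<Rightarrow> 'a set set \<Rightarrow> bool" where
  "k_connected k V E \<longleftrightarrow> card V > k \<and>
     (\<forall>S. S \<subseteq> V \<and> card S < k \<longrightarrow> connected (V - S) (del_edges E S))"

definition edge_cut :: "'a set set \<Rightarrow> 'a set \<Rightarrow> 'a set set" where
  "edge_cut E S = {e\<in>E. card (e \<inter> S) = 1}"

definition ess_4_edge_connected :: "'a set \<Rightarrow> 'a set set \<Rightarrow> bool" where
  "ess_4_edge_connected V E \<longleftrightarrow> cubic V E \<and> k_connected 3 V E \<and>
     (\<forall>S. S \<subseteq> V \<and> S \<noteq> {} \<and> S \<noteq> V \<and> card (edge_cut E S) = 3 \<longrightarrow>
        (\<exists>v\<in>V. edge_cut E S = {e\<in>E. v \<in> e}))"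

definition bipartition :: "'a set \<Rightarrow> 'a set set \<Rightarrow> 'a set \<Rightarrow> 'a set \<Rightarrow> bool" where
  "bipartition V E X Y \<longleftrightarrow> X \<union> Y = V \<and> X \<inter> Y = {} \<and>
     (\<forall>e\<in>E. card (e \<inter> X) = 1 \<and> card (e \<inter> Y) = 1)"

definition perfect_matching :: "'a set \<Rightarrow> 'a set set \<Rightarrow> 'a set set \<Rightarrow> bool" where
  "perfect_matching V E M \<longleftrightarrow> M \<subseteq> E \<and> (\<forall>v\<in>V. \<exists>!e. e \<in> M \<and> v \<in> e)"

definition has_perfect_matching :: "'a set \<Rightarrow> 'a set set \<Rightarrow> bool" where
  "has_perfect_matching V E \<longleftrightarrow> (\<exists>M. perfect_matching V E M)"

end

theory Submission
  imports Defs
begin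


lemma hall:
  "finite A \<Longrightarrow> (\<And>a. a\<in>A \<Longrightarrow> finite (N a)) \<Longrightarrow> (\<And>B. B \<subseteq> A \<Longrightarrow> card B \<le> card (\<Union>(N ` B)))
   \<Longrightarrow> \<exists>f. inj_on f A \<and> (\<forall>a\<in>A. f a \<in> N a)"
proof (induction A arbitrary: N rule: finite_psubset_induct)
  case (psubset A)
  show ?case
  proof (cases "A = {}")
    case True then show ?thesis by auto
  next
    case False
    show ?thesis
    proof (cases "\<exists>B. B \<subset> A \<and> B \<noteq> {} \<and> card (\<Union>(N ` B)) = card B")
      case True
      then obtain B where B: "B \<subset> A" "B \<noteq> {}" "card (\<Union>(N ` B)) = card B" by blast
      define U where "U = \<Union>(N ` B)"
      have finB: "finite B" using B(1) psubset.hyps(1) finite_subset by blast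
      have finU: "finite U" unfolding U_def using finB B(1) psubset.prems(1) by auto
      have "\<exists>f. inj_on f B \<and> (\<forall>a\<in>B. f a \<in> N a)"
        using psubset.IH[OF B(1), of N] psubset.prems B(1) by auto
      then obtain f1 where f1: "inj_on f1 B" "\<forall>a\<in>B. f1 a \<in> N a" by blast
      have "\<exists>f. inj_on f (A - B) \<and> (\<forall>a\<in>A-B. f a \<in> N a - U)"
      proof (rule psubset.IH)
        show "A - B \<subset> A" using B by blast
        show "\<And>a. a \<in> A - B \<Longrightarrow> finite (N a - U)" using psubset.prems(1) by auto
        fix C assume C: "C \<subseteq> A - B"
        define W where "W = (\<Union>a\<in>C. N a - U)"
        have finC: "finite C" using C psubset.hyps(1) finite_subset by blast
        have finW: "finite W" unfolding W_def using finC C psubset.prems(1) by auto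
        have eq: "\<Union>(N ` (B \<union> C)) = U \<union> W" unfolding U_def W_def by auto
        have "card (B \<union> C) = card B + card C" using C finB finC by (subst card_Un_disjoint) auto
        moreover have "card (B \<union> C) \<le> card (\<Union>(N ` (B \<union> C)))"
          by (rule psubset.prems(2)) (use C B(1) in blast)
        moreover have "card (U \<union> W) \<le> card U + card W" by (rule card_Un_le)
        moreover have "card U = card B" using B(3) unfolding U_def .
        ultimately have "card C \<le> card W" unfolding eq by linarith
        then show "card C \<le> card (\<Union>a\<in>C. N a - U)" unfolding W_def .
      qed
      then obtain f2 where f2: "inj_on f2 (A - B)" "\<forall>a\<in>A-B. f2 a \<in> N a - U" by blast
      define f where "f a = (if a \<in> B then f1 a else f2 a)" for a
      have "inj_on f A"
      proof (rule inj_onI)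
        fix a b assume ab: "a \<in> A" "b \<in> A" "f a = f b"
        show "a = b"
        proof (cases "a \<in> B"; cases "b \<in> B")
          assume "a \<in> B" "b \<in> B" then show ?thesis using ab f1(1) unfolding f_def by (auto dest: inj_onD)
        next
          assume "a \<notin> B" "b \<notin> B" then show ?thesis using ab f2(1) unfolding f_def by (auto dest: inj_onD)
        next
          assume h: "a \<in> B" "b \<notin> B"
          have "f1 a \<in> U" using f1(2) h(1) unfolding U_def by blast
          moreover have "f2 b \<notin> U" using f2(2) ab(2) h(2) by blast
          ultimately show ?thesis using ab(3) h unfolding f_def by simp
        next
          assume h: "a \<notin> B" "b \<in> B"
          have "f1 b \<in> U" using f1(2) h(2) unfolding U_def by blast
          moreover have "f2 a \<notin> U" using f2(2) ab(1) h(1) by blast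
          ultimately show ?thesis using ab(3) h unfolding f_def by simp
        qed
      qed
      moreover have "\<forall>a\<in>A. f a \<in> N a" using f1 f2 unfolding f_def by auto
      ultimately show ?thesis by blast
    next
      case noTight: False
      obtain a where a: "a \<in> A" using False by blast
      have "card {a} \<le> card (N a)" using psubset.prems(2)[of "{a}"] a by auto
      then have "N a \<noteq> {}" by auto
      then obtain b where b: "b \<in> N a" by blast
      have "\<exists>f. inj_on f (A - {a}) \<and> (\<forall>z\<in>A-{a}. f z \<in> N z - {b})"
      proof (rule psubset.IH)
        show "A - {a} \<subset> A" using a by blast
        show "\<And>z. z \<in> A - {a} \<Longrightarrow> finite (N z - {b})" using psubset.prems(1) by auto
        fix C assume C: "C \<subseteq> A - {a}"
        show "card C \<le> card (\<Union>z\<in>C. N z - {b})"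
        proof (cases "C = {}")
          case True then show ?thesis by simp
        next
          case False
          have finC: "finite C" using C psubset.hyps(1) finite_subset by blast
          have "card C \<le> card (\<Union>(N ` C))" using psubset.prems(2) C by auto
          moreover have "card (\<Union>(N ` C)) \<noteq> card C" using noTight C False a by blast
          moreover have "card (\<Union>(N ` C)) \<le> card (\<Union>(N ` C) - {b}) + 1"
            using finC C psubset.prems(1)
            by (cases "b \<in> \<Union>(N ` C)") (auto simp: card_Diff_singleton_if card_gt_0_iff)
          moreover have eq: "(\<Union>z\<in>C. N z - {b}) = \<Union>(N ` C) - {b}" by auto
          ultimately show ?thesis unfolding eq by linarith
        qed
      qed
      then obtain g where g: "inj_on g (A - {a})" "\<forall>z\<in>A-{a}. g z \<in> N z - {b}" by blast
      define f where "f = g(a := b)"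
      have "inj_on f A"
      proof (rule inj_onI)
        fix u v assume uv: "u \<in> A" "v \<in> A" "f u = f v"
        show "u = v"
          using uv g unfolding f_def by (cases "u = a"; cases "v = a") (auto dest: inj_onD)
      qed
      moreover have "\<forall>z\<in>A. f z \<in> N z" using g b unfolding f_def by auto
      ultimately show ?thesis by blast
    qed
  qed
qed




lemma cut_mem:
  assumes "p \<noteq> q" "{p,q} \<in> E"
  shows "{p,q} \<in> edge_cut E S \<longleftrightarrow> (p \<in> S \<longleftrightarrow> q \<notin> S)"
  using assms by (cases "p \<in> S"; cases "q \<in> S") (auto simp: edge_cut_def Int_insert_left)

definition starset :: "'a set set \<Rightarrow> 'a set \<Rightarrow> 'a set set" where
  "starset E Z = {e\<in>E. e \<inter> Z \<noteq> {}}"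

locale bic =
  fixes V :: "'a set" and E X Y
  assumes cub: "cubic V E" and bip: "bipartition V E X Y"
begin

lemma gr: "graph V E" using cub unfolding cubic_def by blast
lemma finV: "finite V" using gr unfolding graph_def by blast
lemma XYV: "X \<union> Y = V" using bip unfolding bipartition_def by blast
lemma XYd: "X \<inter> Y = {}" using bip unfolding bipartition_def by blast

lemma edge_form: "e \<in> E \<Longrightarrow> \<exists>u v. u \<noteq> v \<and> u \<in> V \<and> v \<in> V \<and> e = {u,v}"
  using gr unfolding graph_def by blast

lemma finE: "finite E"
proof -
  have "E \<subseteq> Pow V" using edge_form by blast
  then show ?thesis using finV by (meson finite_Pow_iff finite_subset)
qed

lemma edge_XY: assumes "e \<in> E" shows "\<exists>p q. p \<in> X \<and> q \<in> Y \<and> e = {p,q}"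
proof -
  obtain u v where uv: "u \<noteq> v" "u \<in> V" "v \<in> V" "e = {u,v}" using edge_form assms by blast
  have c: "card (e \<inter> X) = 1" "card (e \<inter> Y) = 1" using bip assms unfolding bipartition_def by blast+
  show ?thesis
  proof (cases "u \<in> X")
    case True
    have "v \<notin> X"
    proof
      assume "v \<in> X"
      then have "e \<inter> X = {u,v}" using True uv(4) by blast
      then show False using c(1) uv(1) by simp
    qed
    then have "v \<in> Y" using uv XYV by blast
    then show ?thesis using True uv by blast
  next
    case False
    then have "u \<in> Y" using uv XYV by blast
    have "v \<notin> Y"
    proof
      assume "v \<in> Y"
      then have "e \<inter> Y = {u,v}" using \<open>u \<in> Y\<close> uv(4) by blast
      then show False using c(2) uv(1) by simp
    qed
    then have "v \<in> X" using uv XYV by blast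
    then show ?thesis using \<open>u \<in> Y\<close> uv by blast
  qed
qed

lemma nbhd_sym: "u \<in> nbhd E v \<longleftrightarrow> v \<in> nbhd E u"
  by (simp add: nbhd_def insert_commute)

lemma nbhd_V: "nbhd E v \<subseteq> V"
  unfolding nbhd_def using edge_form by (fastforce simp: doubleton_eq_iff)

lemma nbhd_X: assumes "v \<in> X" shows "nbhd E v \<subseteq> Y"
proof
  fix u assume "u \<in> nbhd E v"
  then have "{u,v} \<in> E" by (simp add: nbhd_def)
  then obtain p q where "p \<in> X" "q \<in> Y" "{u,v} = {p,q}" using edge_XY by blast
  then show "u \<in> Y" using assms XYd by (auto simp: doubleton_eq_iff)
qed

lemma nbhd_Y: assumes "v \<in> Y" shows "nbhd E v \<subseteq> X"
proof
  fix u assume "u \<in> nbhd E v"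
  then have "{u,v} \<in> E" by (simp add: nbhd_def)
  then obtain p q where "p \<in> X" "q \<in> Y" "{u,v} = {p,q}" using edge_XY by blast
  then show "u \<in> X" using assms XYd by (auto simp: doubleton_eq_iff)
qed

lemma finN: "finite (nbhd E v)" using nbhd_V finV finite_subset by blast

lemma star_eq: "{e\<in>E. v \<in> e} = (\<lambda>u. {v,u}) ` nbhd E v"
proof
  show "{e\<in>E. v \<in> e} \<subseteq> (\<lambda>u. {v,u}) ` nbhd E v"
  proof
    fix e assume e: "e \<in> {e\<in>E. v \<in> e}"
    then obtain a b where ab: "e = {a,b}" "a \<noteq> b" using edge_form by blast
    show "e \<in> (\<lambda>u. {v,u}) ` nbhd E v"
    proof (cases "v = a")
      case True
      then have "b \<in> nbhd E v" using e ab by (simp add: nbhd_def insert_commute)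
      then show ?thesis using ab True by blast
    next
      case False
      then have "v = b" using e ab by auto
      then have "a \<in> nbhd E v" using e ab by (simp add: nbhd_def)
      then show ?thesis using ab \<open>v = b\<close> by (auto simp: insert_commute)
    qed
  qed
  show "(\<lambda>u. {v,u}) ` nbhd E v \<subseteq> {e\<in>E. v \<in> e}"
    by (auto simp: nbhd_def insert_commute)
qed

lemma card_N: assumes "v \<in> V" shows "card (nbhd E v) = 3"
proof -
  have "inj_on (\<lambda>u. {v,u}) (nbhd E v)" by (auto simp: inj_on_def doubleton_eq_iff)
  then have "card ((\<lambda>u. {v,u}) ` nbhd E v) = card (nbhd E v)" by (rule card_image)
  moreover have "degree E v = 3" using cub assms unfolding cubic_def by blast
  ultimately show ?thesis using star_eq by (simp add: degree_def)
qed

lemma card_starset: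
  assumes "Z \<subseteq> X \<or> Z \<subseteq> Y"
  shows "card (starset E Z) = 3 * card Z"
proof -
  have Zv: "Z \<subseteq> V" using assms XYV by blast
  have finZ: "finite Z" using Zv finV finite_subset by blast
  have eq: "starset E Z = (\<Union>z\<in>Z. {e\<in>E. z \<in> e})" unfolding starset_def by blast
  have "card (\<Union>z\<in>Z. {e\<in>E. z \<in> e}) = (\<Sum>z\<in>Z. card {e\<in>E. z \<in> e})"
  proof (rule card_UN_disjoint[OF finZ])
    show "\<forall>i\<in>Z. finite {e \<in> E. i \<in> e}" using finE by auto
    show "\<forall>i\<in>Z. \<forall>j\<in>Z. i \<noteq> j \<longrightarrow> {e \<in> E. i \<in> e} \<inter> {e \<in> E. j \<in> e} = {}"
    proof (intro ballI impI)
      fix i j assume ij: "i \<in> Z" "j \<in> Z" "i \<noteq> j"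
      show "{e \<in> E. i \<in> e} \<inter> {e \<in> E. j \<in> e} = {}"
      proof (rule ccontr)
        assume "{e \<in> E. i \<in> e} \<inter> {e \<in> E. j \<in> e} \<noteq> {}"
        then obtain e where e: "e \<in> E" "i \<in> e" "j \<in> e" by blast
        then obtain p q where "p \<in> X" "q \<in> Y" "e = {p,q}" using edge_XY by blast
        then show False using e ij assms XYd by auto
      qed
    qed
  qed
  also have "\<dots> = (\<Sum>z\<in>Z. 3)"
  proof (rule sum.cong)
    fix z assume "z \<in> Z"
    then have "z \<in> V" using Zv by blast
    then show "card {e\<in>E. z \<in> e} = 3" using cub unfolding cubic_def degree_def by blast
  qed simp
  finally show ?thesis using eq by simp
qed

end



lemma cut_small:
  assumes gr: "graph V E" and kc: "k_connected 3 V E" and S: "S \<subseteq> V"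
    and c3: "card (edge_cut E S) < 3" and cS: "card (edge_cut E S) < card S" and VS: "V - S \<noteq> {}"
  shows False
proof -
  have finV: "finite V" using gr unfolding graph_def by blast
  have finE: "finite E"
  proof -
    have "E \<subseteq> Pow V"
    proof
      fix e assume "e \<in> E"
      then obtain u v where "u \<in> V" "v \<in> V" "e = {u,v}" using gr unfolding graph_def by blast
      then show "e \<in> Pow V" by simp
    qed
    then show ?thesis using finV by (meson finite_Pow_iff finite_subset)
  qed
  define W where "W = (\<lambda>e. the_elem (e \<inter> S)) ` edge_cut E S"
  have finC: "finite (edge_cut E S)" using finE unfolding edge_cut_def by simp
  have cW: "card W \<le> card (edge_cut E S)" unfolding W_def using finC by (rule card_image_le)
  have WS: "W \<subseteq> S"
  proof
    fix w assume "w \<in> W"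
    then obtain e where e: "e \<in> edge_cut E S" "w = the_elem (e \<inter> S)" unfolding W_def by blast
    then have "card (e \<inter> S) = 1" unfolding edge_cut_def by blast
    then obtain z where "e \<inter> S = {z}" using card_1_singletonE by blast
    then show "w \<in> S" using e by auto
  qed
  have finS: "finite S" using S finV finite_subset by blast
  have "\<not> S \<subseteq> W"
  proof
    assume "S \<subseteq> W"
    then have "card S \<le> card W" using WS finS by (metis finite_subset card_mono)
    then show False using cS cW by linarith
  qed
  then obtain u where u: "u \<in> S" "u \<notin> W" by blast
  obtain v where v: "v \<in> V" "v \<notin> S" using VS by blast
  have allc: "\<forall>T. T \<subseteq> V \<and> card T < 3 \<longrightarrow> connected (V - T) (del_edges E T)"
    using kc unfolding k_connected_def by blast
  have "card W < 3" using cW c3 by linarith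
  moreover have "W \<subseteq> V" using WS S by blast
  ultimately have "connected (V - W) (del_edges E W)" using allc by blast
  then have path: "(\<lambda>a b. {a, b} \<in> del_edges E W)\<^sup>*\<^sup>* u v"
    using u v WS S unfolding connected_def by blast
  have "\<And>w. (\<lambda>a b. {a, b} \<in> del_edges E W)\<^sup>*\<^sup>* u w \<Longrightarrow> w \<in> S"
  proof -
    fix w assume "(\<lambda>a b. {a, b} \<in> del_edges E W)\<^sup>*\<^sup>* u w"
    then show "w \<in> S"
    proof (induction rule: rtranclp_induct)
      case base then show ?case using u by simp
    next
      case (step a b)
      have ab: "{a,b} \<in> E" "{a,b} \<inter> W = {}" using step(2) unfolding del_edges_def by auto
      show ?case
      proof (rule ccontr)
        assume "b \<notin> S"
        then have "{a,b} \<inter> S = {a}" using step(3) by auto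
        then have "{a,b} \<in> edge_cut E S" using ab(1) unfolding edge_cut_def by simp
        then have "the_elem ({a,b} \<inter> S) \<in> W" unfolding W_def by blast
        then have "a \<in> W" using \<open>{a,b} \<inter> S = {a}\<close> by simp
        then show False using ab(2) by blast
      qed
    qed
  qed
  then show False using path v by blast
qed

lemma cut_star_in:
  assumes gr: "graph V E" and cs: "edge_cut E S = {e\<in>E. v \<in> e}" and vS: "v \<in> S"
  shows "edge_cut E (S - {v}) = {}"
proof (rule ccontr)
  assume "edge_cut E (S - {v}) \<noteq> {}"
  then obtain e where e: "e \<in> edge_cut E (S - {v})" by blast
  then have eE: "e \<in> E" unfolding edge_cut_def by blast
  then obtain p q where pq: "p \<noteq> q" "e = {p,q}" using gr unfolding graph_def by blast
  have m: "e \<in> edge_cut E T \<longleftrightarrow> (p \<in> T \<longleftrightarrow> q \<notin> T)" for T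
    using cut_mem[OF pq(1), of E T] eE pq(2) by simp
  have 1: "p \<in> S - {v} \<longleftrightarrow> q \<notin> S - {v}" using e by (simp only: m)
  have 2: "(p \<in> S \<longleftrightarrow> q \<notin> S) \<longleftrightarrow> (v = p \<or> v = q)" using cs eE m[of S] pq(2) by auto
  show False using 1 2 vS pq(1) by auto
qed

lemma cut_star_out:
  assumes gr: "graph V E" and cs: "edge_cut E S = {e\<in>E. v \<in> e}" and vS: "v \<notin> S"
  shows "edge_cut E (insert v S) = {}"
proof (rule ccontr)
  assume "edge_cut E (insert v S) \<noteq> {}"
  then obtain e where e: "e \<in> edge_cut E (insert v S)" by blast
  then have eE: "e \<in> E" unfolding edge_cut_def by blast
  then obtain p q where pq: "p \<noteq> q" "e = {p,q}" using gr unfolding graph_def by blast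
  have m: "e \<in> edge_cut E T \<longleftrightarrow> (p \<in> T \<longleftrightarrow> q \<notin> T)" for T
    using cut_mem[OF pq(1), of E T] eE pq(2) by simp
  have 1: "p \<in> insert v S \<longleftrightarrow> q \<notin> insert v S" using e by (simp only: m)
  have 2: "(p \<in> S \<longleftrightarrow> q \<notin> S) \<longleftrightarrow> (v = p \<or> v = q)" using cs eE m[of S] pq(2) by auto
  show False using 1 2 vS pq(1) by auto
qed




context bic
begin

lemma hall_cond:
  assumes e4: "ess_4_edge_connected V E" and x: "x \<in> X" and y: "y \<in> Y"
    and R: "R = closed_nbhd E x \<union> closed_nbhd E y"
    and A: "A \<subseteq> X - R"
  shows "card A \<le> card (\<Union>a\<in>A. nbhd E a - R)"
proof (rule ccontr)
  assume neg: "\<not> card A \<le> card (\<Union>a\<in>A. nbhd E a - R)"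
  define B where "B = \<Union>(nbhd E ` A)"
  have eqBR: "(\<Union>a\<in>A. nbhd E a - R) = B - R" unfolding B_def by blast
  have lt: "card (B - R) < card A" using neg unfolding eqBR by simp
  have xV: "x \<in> V" and yV: "y \<in> V" using x y XYV by blast+
  have AX: "A \<subseteq> X" and AR: "A \<inter> R = {}" using A by blast+
  have finA: "finite A" using AX XYV finV finite_subset by blast
  have BY: "B \<subseteq> Y" unfolding B_def using nbhd_X AX by blast
  have finB: "finite B" using BY XYV finV finite_subset by blast
  have Ane: "A \<noteq> {}" using lt by auto
  have NxR: "nbhd E x \<subseteq> R" and NyR: "nbhd E y \<subseteq> R" and xR: "x \<in> R" and yR: "y \<in> R"
    unfolding R closed_nbhd_def by blast+
  define T where "T = B \<inter> nbhd E x"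
  have finT: "finite T" unfolding T_def using finB by simp
  have BRT: "B \<inter> R \<subseteq> T"
  proof
    fix b assume b: "b \<in> B \<inter> R"
    then obtain a where a: "a \<in> A" "b \<in> nbhd E a" unfolding B_def by blast
    have bY: "b \<in> Y" using b BY by blast
    have "b \<noteq> x" using bY x XYd by blast
    moreover have "b \<notin> nbhd E y" using bY nbhd_Y[OF y] XYd by blast
    moreover have "b \<noteq> y"
    proof
      assume "b = y"
      then have "a \<in> nbhd E y" using a(2) nbhd_sym by blast
      then show False using NyR AR a(1) by blast
    qed
    ultimately show "b \<in> T" using b unfolding T_def R closed_nbhd_def by blast
  qed
  have cB: "card B \<le> card (B - R) + card T"
  proof -
    have "B = (B - R) \<union> (B \<inter> R)" by blast
    then have "card B \<le> card (B - R) + card (B \<inter> R)" by (metis card_Un_le)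
    moreover have "card (B \<inter> R) \<le> card T" using BRT finT by (rule card_mono[rotated])
    ultimately show ?thesis by linarith
  qed
  have tle: "card T \<le> 3"
  proof -
    have "card T \<le> card (nbhd E x)" unfolding T_def using finN by (simp add: card_mono)
    then show ?thesis using card_N[OF xV] by simp
  qed
  define S where "S = insert x (A \<union> B)"
  define img where "img = (\<lambda>u. {x,u}) ` T"
  have cimg: "card img = card T"
    unfolding img_def by (rule card_image) (auto simp: inj_on_def doubleton_eq_iff)
  have starx: "{e\<in>E. x \<in> e} = (\<lambda>u. {x,u}) ` nbhd E x" by (rule star_eq)
  have img_sub: "img \<subseteq> {e\<in>E. x \<in> e}" unfolding starx img_def T_def by blast
  define C1 where "C1 = {e\<in>E. x \<in> e} - img"
  have cC1: "card C1 + card T = 3"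
  proof -
    have "card {e\<in>E. x \<in> e} = 3" using cub xV unfolding cubic_def degree_def by blast
    moreover have "finite img" unfolding img_def using finT by simp
    moreover have "card C1 = card {e\<in>E. x \<in> e} - card img"
      unfolding C1_def using \<open>finite img\<close> img_sub by (rule card_Diff_subset)
    moreover have "card img \<le> card {e\<in>E. x \<in> e}" using img_sub finE by (intro card_mono) auto
    ultimately show ?thesis using cimg by linarith
  qed
  have sA_sB: "starset E A \<subseteq> starset E B"
  proof
    fix e assume e: "e \<in> starset E A"
    then obtain a where a: "e \<in> E" "a \<in> e" "a \<in> A" unfolding starset_def by blast
    obtain p q where pq: "p \<in> X" "q \<in> Y" "e = {p,q}" using edge_XY a(1) by blast
    have "a = p" using a pq AX XYd by auto
    then have "q \<in> nbhd E a" using a(1) pq(3) unfolding nbhd_def by (simp add: insert_commute)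
    then have "q \<in> B" unfolding B_def using a(3) by blast
    then show "e \<in> starset E B" using a(1) pq(3) unfolding starset_def by blast
  qed
  have img_sB: "img \<subseteq> starset E B"
    using img_sub unfolding img_def T_def starset_def by blast
  have disj: "starset E A \<inter> img = {}"
  proof -
    have "\<And>u. u \<in> T \<Longrightarrow> {x,u} \<inter> A = {}"
      using AR xR BY XYd AX unfolding T_def by blast
    then show ?thesis unfolding starset_def img_def by blast
  qed
  define C2 where "C2 = starset E B - (starset E A \<union> img)"
  have cC2: "card C2 + 3 * card A + card T = 3 * card B"
  proof -
    have f: "finite (starset E B)" using finE unfolding starset_def by simp
    have fA: "finite (starset E A)" using finE unfolding starset_def by simp
    have fI: "finite img" unfolding img_def using finT by simp
    have "card (starset E A \<union> img) = 3 * card A + card T"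
      using card_Un_disjoint[OF fA fI disj] card_starset AX cimg by simp
    moreover have "card (starset E B) = 3 * card B" using card_starset BY by simp
    moreover have "card C2 = card (starset E B) - card (starset E A \<union> img)"
      unfolding C2_def using sA_sB img_sB f by (subst card_Diff_subset) (auto intro: finite_subset)
    moreover have "card (starset E A \<union> img) \<le> card (starset E B)"
      using sA_sB img_sB f by (intro card_mono) auto
    ultimately show ?thesis by linarith
  qed
  have cutsub: "edge_cut E S \<subseteq> C1 \<union> C2"
  proof
    fix e assume e: "e \<in> edge_cut E S"
    then have eE: "e \<in> E" unfolding edge_cut_def by blast
    obtain p q where pq: "p \<in> X" "q \<in> Y" "e = {p,q}" using edge_XY eE by blast
    have pnq: "p \<noteq> q" using pq XYd by blast
    have m: "p \<in> S \<longleftrightarrow> q \<notin> S" using cut_mem[OF pnq, of E S] eE pq(3) e by simp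
    have pS: "p \<in> S \<longleftrightarrow> p = x \<or> p \<in> A" unfolding S_def using pq(1) BY XYd by blast
    have qS: "q \<in> S \<longleftrightarrow> q \<in> B" unfolding S_def using pq(2) x AX XYd by blast
    have qN: "q \<in> nbhd E p" using eE pq(3) unfolding nbhd_def by (simp add: insert_commute)
    show "e \<in> C1 \<union> C2"
    proof (cases "p \<in> A")
      case True
      then have "q \<in> B" unfolding B_def using qN by blast
      then show ?thesis using m pS qS True by blast
    next
      case pA: False
      show ?thesis
      proof (cases "p = x")
        case True
        then have "q \<notin> B" using m pS qS by blast
        then have "e \<notin> img" unfolding img_def T_def using pq(3) True
          by (auto simp: doubleton_eq_iff)
        then have "e \<in> C1" unfolding C1_def using eE pq(3) True by blast
        then show ?thesis by blast
      next
        case False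
        then have "q \<in> B" using m pS qS pA by blast
        then have "e \<in> starset E B" unfolding starset_def using eE pq(3) by blast
        moreover have "e \<notin> starset E A" unfolding starset_def using pq pA AX XYd by blast
        moreover have "e \<notin> img"
        proof
          assume "e \<in> img"
          then obtain u where "u \<in> T" "e = {x,u}" unfolding img_def by blast
          then have "x \<in> {p,q}" using pq(3) by blast
          then show False using False x pq(2) XYd by blast
        qed
        ultimately have "e \<in> C2" unfolding C2_def by blast
        then show ?thesis by blast
      qed
    qed
  qed
  have finC12: "finite (C1 \<union> C2)" using finE unfolding C1_def C2_def starset_def by simp
  have ccut: "card (edge_cut E S) \<le> card T"
  proof -
    have "card (edge_cut E S) \<le> card (C1 \<union> C2)" using cutsub finC12 by (rule card_mono[rotated])
    also have "\<dots> \<le> card C1 + card C2" by (rule card_Un_le)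
    finally show ?thesis using cC1 cC2 cB lt by linarith
  qed
  have SV: "S \<subseteq> V" unfolding S_def using xV AX BY XYV by blast
  have yS: "y \<notin> S"
  proof
    assume "y \<in> S"
    moreover have "y \<noteq> x" using x y XYd by blast
    moreover have "y \<notin> A" using yR AR by blast
    moreover have "y \<notin> B"
    proof
      assume "y \<in> B"
      then obtain a where "a \<in> A" "y \<in> nbhd E a" unfolding B_def by blast
      then show False using nbhd_sym NyR AR by blast
    qed
    ultimately show False unfolding S_def by blast
  qed
  obtain a0 where a0: "a0 \<in> A" using Ane by blast
  have "nbhd E a0 \<subseteq> S" unfolding S_def B_def using a0 by blast
  moreover have "x \<in> S" "a0 \<in> S" unfolding S_def using a0 by blast+
  moreover have a0X: "a0 \<in> X" using a0 AX by blast
  moreover have "nbhd E a0 \<subseteq> Y" using nbhd_X[OF a0X] .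
  moreover have "x \<notin> nbhd E a0" using \<open>nbhd E a0 \<subseteq> Y\<close> x XYd by blast
  moreover have "a0 \<notin> nbhd E a0" using \<open>nbhd E a0 \<subseteq> Y\<close> a0X XYd by blast
  moreover have "x \<noteq> a0" using a0 AR xR by blast
  ultimately have "insert x (insert a0 (nbhd E a0)) \<subseteq> S" by blast
  moreover have "card (insert x (insert a0 (nbhd E a0))) = 5"
    using card_N a0 AX XYV finN \<open>x \<notin> nbhd E a0\<close> \<open>a0 \<notin> nbhd E a0\<close> \<open>x \<noteq> a0\<close> by auto
  moreover have finS: "finite S" using SV finV finite_subset by blast
  ultimately have cS: "5 \<le> card S" by (metis card_mono)
  have kc: "k_connected 3 V E" using e4 unfolding ess_4_edge_connected_def by blast
  have VS: "V - S \<noteq> {}" using yS yV by blast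
  show False
  proof (cases "card (edge_cut E S) < 3")
    case True
    then show False using cut_small[OF gr kc SV True] cS VS by linarith
  next
    case False
    then have "card (edge_cut E S) = 3" using ccut tle by linarith
    moreover have "S \<noteq> {}" "S \<noteq> V" using cS VS by auto
    ultimately obtain v where v: "v \<in> V" "edge_cut E S = {e\<in>E. v \<in> e}"
      using e4 SV unfolding ess_4_edge_connected_def by blast
    show False
    proof (cases "v \<in> S")
      case True
      have c0: "edge_cut E (S - {v}) = {}" by (rule cut_star_in[OF gr v(2) True])
      have "card (S - {v}) > 0" using cS finS True by (simp add: card_Diff_singleton_if)
      moreover have "V - (S - {v}) \<noteq> {}" using yS yV True by blast
      ultimately show False using cut_small[OF gr kc, of "S - {v}"] c0 SV by auto
    next
      case False
      have c0: "edge_cut E (insert v S) = {}" by (rule cut_star_out[OF gr v(2) False])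
      have "v \<noteq> y"
      proof
        assume vy: "v = y"
        have "nbhd E y \<subseteq> {x}"
        proof
          fix u assume u: "u \<in> nbhd E y"
          then have uE: "{y,u} \<in> E" unfolding nbhd_def by (simp add: insert_commute)
          have "y \<noteq> u" using u nbhd_Y[OF y] y XYd by blast
          then have "{y,u} \<in> edge_cut E S \<longleftrightarrow> (y \<in> S \<longleftrightarrow> u \<notin> S)" using cut_mem uE by metis
          moreover have "{y,u} \<in> edge_cut E S" using v(2) vy uE by blast
          ultimately have "u \<in> S" using yS by blast
          moreover have "u \<in> X" using u nbhd_Y[OF y] by blast
          moreover have "u \<notin> A" using u NyR AR by blast
          ultimately show "u \<in> {x}" unfolding S_def using BY XYd by blast
        qed
        then have "card (nbhd E y) \<le> card {x}" by (rule card_mono[rotated]) simp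
        then show False using card_N[OF yV] by simp
      qed
      have "card (insert v S) > 0" using finS by (simp add: card_gt_0_iff)
      moreover have "V - insert v S \<noteq> {}" using yS yV \<open>v \<noteq> y\<close> by blast
      moreover have "insert v S \<subseteq> V" using SV v(1) by blast
      ultimately show False using cut_small[OF gr kc, of "insert v S"] c0 by auto
    qed
  qed
qed

end



lemma bic_swap: "bic V E X Y \<Longrightarrow> bic V E Y X"
  unfolding bic_def bipartition_def by (auto simp: Int_commute)

theorem lemma2p12:
  fixes V :: "'a set" and E :: "'a set set" and X Y :: "'a set" and x y :: 'a
  assumes "cubic V E"
    and "ess_4_edge_connected V E"
    and "bipartition V E X Y"
    and "x \<in> X" and "y \<in> Y"
  shows "has_perfect_matching (V - (closed_nbhd E x \<union> closed_nbhd E y))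
           (del_edges E (closed_nbhd E x \<union> closed_nbhd E y))"
proof -
  define R where "R = closed_nbhd E x \<union> closed_nbhd E y"
  have b1: "bic V E X Y" using assms(1,3) by (simp add: bic_def)
  have b2: "bic V E Y X" using bic_swap[OF b1] .
  have R2: "R = closed_nbhd E y \<union> closed_nbhd E x" unfolding R_def by blast
  have finV: "finite V" using bic.finV[OF b1] .
  have XYV: "X \<union> Y = V" and XYd: "X \<inter> Y = {}" using bic.XYV[OF b1] bic.XYd[OF b1] by auto
  have finX: "finite (X - R)" using finV XYV by (metis finite_Diff finite_Un)
  have finY: "finite (Y - R)" using finV XYV by (metis finite_Diff finite_Un)
  have "\<exists>f. inj_on f (X - R) \<and> (\<forall>a\<in>X - R. f a \<in> nbhd E a - R)"
  proof (rule hall[OF finX])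
    show "\<And>a. a \<in> X - R \<Longrightarrow> finite (nbhd E a - R)" using bic.finN[OF b1] by simp
    show "\<And>B. B \<subseteq> X - R \<Longrightarrow> card B \<le> card (\<Union>a\<in>B. nbhd E a - R)"
      using bic.hall_cond[OF b1 assms(2) assms(4) assms(5) R_def] by simp
  qed
  then obtain f where f: "inj_on f (X - R)" "\<forall>a\<in>X - R. f a \<in> nbhd E a - R" by blast
  have "\<exists>g. inj_on g (Y - R) \<and> (\<forall>a\<in>Y - R. g a \<in> nbhd E a - R)"
  proof (rule hall[OF finY])
    show "\<And>a. a \<in> Y - R \<Longrightarrow> finite (nbhd E a - R)" using bic.finN[OF b1] by simp
    show "\<And>B. B \<subseteq> Y - R \<Longrightarrow> card B \<le> card (\<Union>a\<in>B. nbhd E a - R)"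
      using bic.hall_cond[OF b2 assms(2) assms(5) assms(4) R2] by simp
  qed
  then obtain g where g: "inj_on g (Y - R)" "\<forall>a\<in>Y - R. g a \<in> nbhd E a - R" by blast
  have fXY: "f ` (X - R) \<subseteq> Y - R" using f(2) bic.nbhd_X[OF b1] by blast
  have gYX: "g ` (Y - R) \<subseteq> X - R" using g(2) bic.nbhd_Y[OF b1] by blast
  have c1: "card (X - R) \<le> card (Y - R)" using card_inj_on_le[OF f(1) fXY finY] .
  have c2: "card (Y - R) \<le> card (X - R)" using card_inj_on_le[OF g(1) gYX finX] .
  have fim: "f ` (X - R) = Y - R"
  proof (rule card_subset_eq[OF finY fXY])
    show "card (f ` (X - R)) = card (Y - R)" using card_image[OF f(1)] c1 c2 by simp
  qed
  define M where "M = (\<lambda>a. {a, f a}) ` (X - R)"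
  have "perfect_matching (V - R) (del_edges E R) M"
    unfolding perfect_matching_def
  proof (intro conjI ballI)
    show "M \<subseteq> del_edges E R"
    proof
      fix e assume "e \<in> M"
      then obtain a where a: "a \<in> X - R" "e = {a, f a}" unfolding M_def by blast
      have "f a \<in> nbhd E a" "f a \<notin> R" using f(2) a(1) by auto
      then have "{a, f a} \<in> E" unfolding nbhd_def by (simp add: insert_commute)
      then show "e \<in> del_edges E R" unfolding del_edges_def using a \<open>f a \<notin> R\<close> by auto
    qed
  next
    fix v assume v: "v \<in> V - R"
    show "\<exists>!e. e \<in> M \<and> v \<in> e"
    proof (cases "v \<in> X")
      case True
      then have vX: "v \<in> X - R" using v by blast
      show ?thesis
      proof (rule ex1I[of _ "{v, f v}"])
        show "{v, f v} \<in> M \<and> v \<in> {v, f v}" unfolding M_def using vX by blast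
        fix e assume e: "e \<in> M \<and> v \<in> e"
        then obtain a where a: "a \<in> X - R" "e = {a, f a}" unfolding M_def by blast
        have "f a \<in> Y" using fXY a(1) by blast
        then have "v = a" using e a(2) True XYd by auto
        then show "e = {v, f v}" using a(2) by simp
      qed
    next
      case False
      then have vY: "v \<in> Y - R" using v XYV by blast
      then obtain a where a: "a \<in> X - R" "v = f a" using fim by blast
      show ?thesis
      proof (rule ex1I[of _ "{a, f a}"])
        show "{a, f a} \<in> M \<and> v \<in> {a, f a}" unfolding M_def using a by blast
        fix e assume e: "e \<in> M \<and> v \<in> e"
        then obtain a' where a': "a' \<in> X - R" "e = {a', f a'}" unfolding M_def by blast
        have "v \<noteq> a'" using a'(1) False by blast
        then have "v = f a'" using e a'(2) by auto
        then have "a' = a" using a f(1) a'(1) by (metis inj_onD)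
        then show "e = {a, f a}" using a'(2) by simp
      qed
    qed
  qed
  then show ?thesis unfolding has_perfect_matching_def R_def by blast
qed


end
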